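(* Let $P$ be a poset on $[n]=\{1,\dots,n\}$ whose labeling is natural (the identity permutation $e$ is a linear extension), and let $x_1,\dots,x_n$ be strictly positive reals. Let $M$ be the transition matrix of the promotion graph of $P$. Define, for $\pi\in\mathcal{L}(P)$, $$w(\pi)=\prod_{i=1}^{n}\frac{x_1+\cdots+x_i}{x_{\pi_1}+\cdots+x_{\pi_i}}.$$ Then $w$ is the stationary state of the promotion graph Markov chain normalized by $w(e)=1$, i.e. $\sum_{\pi\in\mathcal{L}(P)}M(\pi',\pi)\,w(\pi)=0$ for every $\pi'\in\mathcal{L}(P)$.
   Context: Linear extensions: $\mathcal{L}(P)=\{\pi\in S_n : i\prec j \text{ in } P \Rightarrow \pi^{-1}_i<\pi^{-1}_j\}$, written in one-line notation $\pi=\pi_1\cdots\pi_n$ (so $i\prec j$ means $i$ appears before $j$). For $1\le i<n$, the operator $\tau_i$ acts on the right on $\mathcal{L}(P)$: $\pi\tau_i$ is obtained from $\pi$ by swapping $\pi_i$ and $\pi_{i+1}$ if they are incomparable in $P$, and $\pi\tau_i=\pi$ otherwise. Operators compose as right actions: $\pi(\sigma\tau)=(\pi\sigma)\tau$. The extended promotion operators are $\partial_j=\tau_j\tau_{j+1}\cdots\tau_{n-1}$ for $1\le j\le n$ ($\partial_n$ is the identity). Promotion graph: vertex set $\mathcal{L}(P)$, and for each $\pi\in\mathcal{L}(P)$ and $j\in[n]$ a directed edge $\pi\to\pi\partial_j$ of weight $x_{\pi_j}$. Transition matrix $M$ (rows and columns indexed by $\mathcal{L}(P)$): for $\pi'\neq\pi$,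 $M(\pi',\pi)$ is the sum of the weights of edges $\pi\to\pi'$; $M(\pi,\pi)$ is minus the sum of weights of all edges $\pi\to\pi'$ with $\pi'\ne\pi$ (loops are not counted). *)

theory Defs
  imports Complex_Main
begin

definition is_poset :: "nat \<Rightarrow> (nat \<Rightarrow> nat \<Rightarrow> bool) \<Rightarrow> bool" where
  "is_poset n le \<longleftrightarrow>
     (\<forall>i\<in>{1..n}. le i i) \<and>
     (\<forall>i\<in>{1..n}. \<forall>j\<in>{1..n}. le i j \<and> le j i \<longrightarrow> i = j) \<and>
     (\<forall>i\<in>{1..n}. \<forall>j\<in>{1..n}. \<forall>k\<in>{1..n}. le i j \<and> le j k \<longrightarrow> le i k)"

definition prec :: "(nat \<Rightarrow> nat \<Rightarrow> bool) \<Rightarrow> nat \<Rightarrow> nat \<Rightarrow> bool" where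
  "prec le i j \<longleftrightarrow> le i j \<and> i \<noteq> j"

text \<open>Permutations of [n] in one-line notation: the list [pi_1,...,pi_n]
  (list index k corresponds to position k+1).\<close>
definition perm_list :: "nat \<Rightarrow> nat list \<Rightarrow> bool" where
  "perm_list n \<pi> \<longleftrightarrow> length \<pi> = n \<and> distinct \<pi> \<and> set \<pi> = {1..n}"

definition lin_ext :: "nat \<Rightarrow> (nat \<Rightarrow> nat \<Rightarrow> bool) \<Rightarrow> nat list set" where
  "lin_ext n le = {\<pi>. perm_list n \<pi> \<and>
      (\<forall>a<n. \<forall>b<n. prec le (\<pi> ! a) (\<pi> ! b) \<longrightarrow> a < b)}"

definition natural_labeling :: "nat \<Rightarrow> (nat \<Rightarrow> nat \<Rightarrow> bool) \<Rightarrow> bool" where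
  "natural_labeling n le \<longleftrightarrow> [1..<n+1] \<in> lin_ext n le"

definition incomparable :: "(nat \<Rightarrow> nat \<Rightarrow> bool) \<Rightarrow> nat \<Rightarrow> nat \<Rightarrow> bool" where
  "incomparable le a b \<longleftrightarrow> \<not> le a b \<and> \<not> le b a"

text \<open>tau_i (1 \<le> i < n): swap positions i and i+1 (1-indexed) if their entries are
  incomparable, otherwise do nothing.\<close>
definition tau :: "(nat \<Rightarrow> nat \<Rightarrow> bool) \<Rightarrow> nat \<Rightarrow> nat list \<Rightarrow> nat list" where
  "tau le i \<pi> = (if incomparable le (\<pi> ! (i - 1)) (\<pi> ! i)
                 then \<pi>[i - 1 := \<pi> ! i, i := \<pi> ! (i - 1)] else \<pi>)"

text \<open>Extended promotion partial_j = tau_j tau_{j+1} ... tau_{n-1}, acting on the right: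
  first tau_j is applied, then tau_{j+1}, ..., finally tau_{n-1}.\<close>
definition ext_prom :: "nat \<Rightarrow> (nat \<Rightarrow> nat \<Rightarrow> bool) \<Rightarrow> nat \<Rightarrow> nat list \<Rightarrow> nat list" where
  "ext_prom n le j \<pi> = fold (tau le) [j..<n] \<pi>"

text \<open>Transition matrix of the promotion graph: M \<pi>' \<pi>.  The edge \<pi> \<rightarrow> \<pi> partial_j
  (j \<in> [n]) has weight x_{\<pi>_j} = x (\<pi> ! (j-1)).\<close>
definition trans_matrix :: "nat \<Rightarrow> (nat \<Rightarrow> nat \<Rightarrow> bool) \<Rightarrow> (nat \<Rightarrow> real)
    \<Rightarrow> nat list \<Rightarrow> nat list \<Rightarrow> real" where
  "trans_matrix n le x \<pi>' \<pi> =
     (if \<pi>' \<noteq> \<pi>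
      then (\<Sum>j\<in>{j\<in>{1..n}. ext_prom n le j \<pi> = \<pi>'}. x (\<pi> ! (j - 1)))
      else - (\<Sum>j\<in>{j\<in>{1..n}. ext_prom n le j \<pi> \<noteq> \<pi>}. x (\<pi> ! (j - 1))))"

definition wt :: "nat \<Rightarrow> (nat \<Rightarrow> real) \<Rightarrow> nat list \<Rightarrow> real" where
  "wt n x \<pi> = (\<Prod>i\<in>{1..n}. (\<Sum>k\<in>{1..i}. x k) / (\<Sum>k\<in>{1..i}. x (\<pi> ! (k - 1))))"

end

theory Submission
  imports Defs
begin

definition inv_prom :: "nat \<Rightarrow> (nat \<Rightarrow> nat \<Rightarrow> bool) \<Rightarrow> nat \<Rightarrow> nat list \<Rightarrow> nat list" where
  "inv_prom n le j \<pi> = fold (tau le) (rev [j..<n]) \<pi>"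

lemma tau_len[simp]: "length (tau le i \<pi>) = length \<pi>"
  by (simp add: tau_def)

lemma tau_invol:
  assumes "1 \<le> i" "i < length \<pi>"
  shows "tau le i (tau le i \<pi>) = \<pi>"
proof (cases "incomparable le (\<pi> ! (i - 1)) (\<pi> ! i)")
  case True
  have i1: "i - 1 < length \<pi>" "i - 1 \<noteq> i" using assms by auto
  let ?s = "\<pi>[i - 1 := \<pi> ! i, i := \<pi> ! (i - 1)]"
  have a: "?s ! (i-1) = \<pi> ! i" "?s ! i = \<pi> ! (i-1)" using assms i1 by (auto simp: nth_list_update)
  have b: "incomparable le (?s ! (i-1)) (?s ! i)" using True a unfolding incomparable_def by auto
  have "tau le i ?s = ?s[i - 1 := \<pi> ! (i - 1), i := \<pi> ! i]" using b a by (simp add: tau_def)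
  also have "\<dots> = \<pi>" using assms i1
    by (metis list_update_overwrite list_update_id list_update_swap)
  finally show ?thesis using True by (simp add: tau_def)
next
  case False
  then show ?thesis by (simp add: tau_def)
qed

lemma tau_nth:
  assumes "1 \<le> i" "i < length \<pi>" "incomparable le (\<pi> ! (i - 1)) (\<pi> ! i)" "t < length \<pi>"
  shows "tau le i \<pi> ! t = (if t = i then \<pi>!(i-1) else if t = i - 1 then \<pi>!i else \<pi>!t)"
  using assms by (auto simp: tau_def nth_list_update)

lemma tau_nth_other:
  assumes "t \<noteq> i" "t \<noteq> i - 1"
  shows "tau le i \<pi> ! t = \<pi> ! t"
  using assms by (auto simp: tau_def nth_list_update)

lemma tau_lin:
  assumes "\<pi> \<in> lin_ext n le" "1 \<le> i" "i < n"
  shows "tau le i \<pi> \<in> lin_ext n le"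
proof (cases "incomparable le (\<pi> ! (i - 1)) (\<pi> ! i)")
  case False
  then show ?thesis using assms by (simp add: tau_def)
next
  case True
  have len: "length \<pi> = n" using assms(1) by (simp add: lin_ext_def perm_list_def)
  have p: "perm_list n (tau le i \<pi>)" using assms(1) True len assms
    by (simp add: lin_ext_def perm_list_def tau_def)
  have o: "\<forall>a<n. \<forall>b<n. prec le (\<pi> ! a) (\<pi> ! b) \<longrightarrow> a < b" using assms(1) by (simp add: lin_ext_def)
  have "\<forall>a<n. \<forall>b<n. prec le (tau le i \<pi> ! a) (tau le i \<pi> ! b) \<longrightarrow> a < b"
  proof (intro allI impI)
    fix a b assume ab: "a < n" "b < n" and pr: "prec le (tau le i \<pi> ! a) (tau le i \<pi> ! b)"
    have na: "tau le i \<pi> ! a = (if a = i then \<pi>!(i-1) else if a = i - 1 then \<pi>!i else \<pi>!a)"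
      using tau_nth[OF assms(2) _ True] len ab assms by auto
    have nb: "tau le i \<pi> ! b = (if b = i then \<pi>!(i-1) else if b = i - 1 then \<pi>!i else \<pi>!b)"
      using tau_nth[OF assms(2) _ True] len ab assms by auto
    have inc: "\<not> prec le (\<pi>!(i-1)) (\<pi>!i)" "\<not> prec le (\<pi>!i) (\<pi>!(i-1))"
      using True by (auto simp: incomparable_def prec_def)
    have i1: "i - 1 < n" using assms by auto
    have neq: "i - 1 \<noteq> i" using assms by arith
    show "a < b"
    proof -
      { assume "a = i" "b = i - 1" then have False using pr na nb inc neq by simp }
      moreover
      { assume "a = i - 1" "b = i" then have False using pr na nb inc neq by simp }
      moreover
      { assume "a = b" then have False using pr by (simp add: prec_def) }
      moreover
      { assume A: "a = i" "b \<noteq> i - 1" "b \<noteq> i"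
        then have "i - 1 < b" using o pr na nb ab neq i1 by auto
        then have ?thesis using A by auto }
      moreover
      { assume A: "a = i - 1" "b \<noteq> i - 1" "b \<noteq> i"
        then have "i < b" using o pr na nb ab neq assms by auto
        then have ?thesis using A by auto }
      moreover
      { assume A: "b = i" "a \<noteq> i - 1" "a \<noteq> i"
        then have "a < i - 1" using o pr na nb ab neq i1 by auto
        then have ?thesis using A by auto }
      moreover
      { assume A: "b = i - 1" "a \<noteq> i - 1" "a \<noteq> i"
        then have "a < i" using o pr na nb ab neq assms by auto
        then have ?thesis using A by auto }
      moreover
      { assume A: "a \<noteq> i - 1" "a \<noteq> i" "b \<noteq> i - 1" "b \<noteq> i"
        then have ?thesis using o pr na nb ab neq by auto }
      ultimately show ?thesis by blast
    qed
  qed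
  then show ?thesis using p by (simp add: lin_ext_def)
qed

lemma fold_pres:
  assumes "\<And>i y. i \<in> set xs \<Longrightarrow> y \<in> A \<Longrightarrow> f i y \<in> A" "y \<in> A"
  shows "fold f xs y \<in> A"
  using assms by (induction xs arbitrary: y) auto

lemma fold_inv:
  assumes "\<And>i y. i \<in> set xs \<Longrightarrow> y \<in> A \<Longrightarrow> f i y \<in> A \<and> f i (f i y) = y" "y \<in> A"
  shows "fold f xs (fold f (rev xs) y) = y"
  using assms
proof (induction xs arbitrary: y)
  case Nil then show ?case by simp
next
  case (Cons a xs)
  have "fold f (rev xs) y \<in> A" using Cons.prems by (intro fold_pres) auto
  then have "f a (f a (fold f (rev xs) y)) = fold f (rev xs) y" using Cons.prems by auto
  then show ?case using Cons by simp
qed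


lemma lin_len: "\<pi> \<in> lin_ext n le \<Longrightarrow> length \<pi> = n"
  by (simp add: lin_ext_def perm_list_def)

lemma lin_set: "\<pi> \<in> lin_ext n le \<Longrightarrow> set \<pi> = {1..n}"
  by (simp add: lin_ext_def perm_list_def)

lemma inv_in:
  assumes "1 \<le> j" "\<pi> \<in> lin_ext n le"
  shows "inv_prom n le j \<pi> \<in> lin_ext n le"
  unfolding inv_prom_def
  by (rule fold_pres[OF _ assms(2)]) (use assms tau_lin in auto)

lemma tau_inv_L:
  assumes "1 \<le> i" "i < n" "y \<in> lin_ext n le"
  shows "tau le i y \<in> lin_ext n le \<and> tau le i (tau le i y) = y"
  using tau_lin[OF assms(3,1,2)] tau_invol[OF assms(1)] lin_len[OF assms(3)] assms(2) by auto

lemma ext_inv: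
  assumes "1 \<le> j" "\<pi> \<in> lin_ext n le"
  shows "ext_prom n le j (inv_prom n le j \<pi>) = \<pi>"
  unfolding inv_prom_def ext_prom_def
  by (rule fold_inv[OF _ assms(2)]) (use assms tau_inv_L in auto)

lemma inv_ext:
  assumes "1 \<le> j" "\<pi> \<in> lin_ext n le"
  shows "inv_prom n le j (ext_prom n le j \<pi>) = \<pi>"
proof -
  have "fold (tau le) (rev [j..<n]) (fold (tau le) (rev (rev [j..<n])) \<pi>) = \<pi>"
    by (rule fold_inv[OF _ assms(2)]) (use assms tau_inv_L in auto)
  then show ?thesis unfolding inv_prom_def ext_prom_def by simp
qed

lemma inv_step:
  assumes "j < n"
  shows "inv_prom n le j \<pi> = tau le j (inv_prom n le (Suc j) \<pi>)"
  using assms unfolding inv_prom_def by (simp add: upt_conv_Cons)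

lemma inv_n: "inv_prom n le n \<pi> = \<pi>"
  unfolding inv_prom_def by simp

definition PS :: "(nat \<Rightarrow> real) \<Rightarrow> nat list \<Rightarrow> nat \<Rightarrow> real" where
  "PS x \<sigma> i = (\<Sum>t<i. x (\<sigma> ! t))"

lemma S_eq: "(\<Sum>k\<in>{1..i}. x (\<sigma> ! (k - 1))) = PS x \<sigma> i"
  unfolding PS_def by (induction i) (auto simp: atLeastAtMostSuc_conv)

lemma PS_Suc: "PS x \<sigma> (Suc i) = PS x \<sigma> i + x (\<sigma> ! i)"
  by (simp add: PS_def)

lemma PS_tau:
  assumes "1 \<le> k" "k < length \<sigma>" "i \<noteq> k"
  shows "PS x (tau le k \<sigma>) i = PS x \<sigma> i"
proof (cases "incomparable le (\<sigma> ! (k - 1)) (\<sigma> ! k)")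
  case False
  then show ?thesis by (simp add: tau_def)
next
  case True
  show ?thesis
  proof (cases "i < k")
    case True
    then show ?thesis unfolding PS_def
      by (intro sum.cong refl) (auto simp: tau_nth_other)
  next
    case False
    then have ik: "Suc k \<le> i" using assms by auto
    obtain m where m: "k = Suc m" using assms by (cases k) auto
    have bas: "PS x (tau le k \<sigma>) (Suc k) = PS x \<sigma> (Suc k)"
    proof -
      have "PS x (tau le k \<sigma>) m = PS x \<sigma> m" unfolding PS_def
        by (intro sum.cong refl) (auto simp: tau_nth_other m)
      moreover have "tau le k \<sigma> ! m = \<sigma> ! k" "tau le k \<sigma> ! k = \<sigma> ! m"
        using tau_nth[OF assms(1,2) True] assms m by auto
      ultimately show ?thesis using m by (simp add: PS_Suc)
    qed
    show ?thesis using ik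
    proof (induction i rule: nat_induct_at_least)
      case base then show ?case using bas by simp
    next
      case (Suc i)
      then show ?case by (simp add: PS_Suc tau_nth_other)
    qed
  qed
qed


lemma wt_PS: "wt n x \<sigma> = (\<Prod>i\<in>{1..n}. (\<Sum>k\<in>{1..i}. x k) / PS x \<sigma> i)"
  unfolding wt_def S_eq ..

lemma PS_pos:
  assumes "\<sigma> \<in> lin_ext n le" "1 \<le> i" "i \<le> n" "\<And>i. i \<in> {1..n} \<Longrightarrow> x i > 0"
  shows "PS x \<sigma> i > 0"
  unfolding PS_def
proof (rule sum_pos)
  show "finite {..<i}" by simp
  show "{..<i} \<noteq> {}" using assms(2) by (metis lessThan_iff less_le_trans empty_iff zero_less_one)
  fix t assume "t \<in> {..<i}"
  then have "\<sigma> ! t \<in> set \<sigma>" using lin_len[OF assms(1)] assms by auto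
  then show "0 < x (\<sigma> ! t)" using lin_set[OF assms(1)] assms(4) by auto
qed

lemma swap_wt:
  assumes "\<sigma> \<in> lin_ext n le" "1 \<le> k" "k < n" "\<And>i. i \<in> {1..n} \<Longrightarrow> x i > 0"
  shows "PS x (tau le k \<sigma>) k * wt n x (tau le k \<sigma>) = PS x \<sigma> k * wt n x \<sigma>"
proof -
  let ?X = "\<lambda>i. (\<Sum>k\<in>{1..i}. x k)"
  have t: "tau le k \<sigma> \<in> lin_ext n le" using tau_lin assms by auto
  have len: "k < length \<sigma>" using lin_len[OF assms(1)] assms by simp
  have k: "k \<in> {1..n}" using assms by auto
  have gen: "PS x \<rho> k * wt n x \<rho> = ?X k * (\<Prod>i\<in>{1..n}-{k}. ?X i / PS x \<rho> i)"
    if "\<rho> \<in> lin_ext n le" for \<rho>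
  proof -
    have "PS x \<rho> k > 0" using PS_pos[OF that] assms by auto
    moreover have "wt n x \<rho> = ?X k / PS x \<rho> k * (\<Prod>i\<in>{1..n}-{k}. ?X i / PS x \<rho> i)"
      unfolding wt_PS by (subst prod.remove[OF _ k]) auto
    ultimately show ?thesis by simp
  qed
  have "(\<Prod>i\<in>{1..n}-{k}. ?X i / PS x (tau le k \<sigma>) i) = (\<Prod>i\<in>{1..n}-{k}. ?X i / PS x \<sigma> i)"
    by (intro prod.cong refl) (simp add: PS_tau[OF assms(2) len])
  then show ?thesis using gen[OF t] gen[OF assms(1)] by simp
qed

lemma telescope:
  assumes "\<pi>' \<in> lin_ext n le" "\<And>i. i \<in> {1..n} \<Longrightarrow> x i > 0" "1 \<le> k" "k \<le> n"
  shows "(\<Sum>j\<in>{k..n}. x (inv_prom n le j \<pi>' ! (j - 1)) * wt n x (inv_prom n le j \<pi>'))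
    = PS x \<pi>' n * wt n x \<pi>' - PS x (inv_prom n le k \<pi>') (k - 1) * wt n x (inv_prom n le k \<pi>')"
  using assms(4,3)
proof (induction k rule: inc_induct)
  case base
  obtain m where m: "n = Suc m" using base by (cases n) auto
  show ?case using m by (simp add: inv_n PS_Suc algebra_simps)
next
  case (step k)
  let ?s = "\<lambda>j. inv_prom n le j \<pi>'"
  have IH: "(\<Sum>j\<in>{Suc k..n}. x (?s j ! (j - 1)) * wt n x (?s j))
    = PS x \<pi>' n * wt n x \<pi>' - PS x (?s (Suc k)) k * wt n x (?s (Suc k))"
    using step by simp
  have eq: "{k..n} = insert k {Suc k..n}" using step by auto
  have sk: "?s k = tau le k (?s (Suc k))" using inv_step step by auto
  have inS: "?s (Suc k) \<in> lin_ext n le" using inv_in assms by auto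
  obtain m where m: "k = Suc m" using step by (cases k) auto
  have "PS x (?s k) k * wt n x (?s k) = PS x (?s (Suc k)) k * wt n x (?s (Suc k))"
    using swap_wt[OF inS step(4) step(2) assms(2)] sk by simp
  moreover have "PS x (?s k) k = PS x (?s k) (k - 1) + x (?s k ! (k - 1))"
    using m by (simp add: PS_Suc)
  ultimately show ?case unfolding eq using IH by (simp add: algebra_simps)
qed


lemma finite_L: "finite (lin_ext n le)"
proof (rule finite_subset)
  show "lin_ext n le \<subseteq> {xs. set xs \<subseteq> {1..n} \<and> length xs = n}"
    by (auto simp: lin_ext_def perm_list_def)
  show "finite {xs. set xs \<subseteq> {1..n} \<and> length xs = n}"
    by (rule finite_lists_length_eq) simp
qed

lemma stat_sum:
  assumes "\<pi>' \<in> lin_ext n le" "\<And>i. i \<in> {1..n} \<Longrightarrow> x i > 0"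
  shows "(\<Sum>\<pi>\<in>lin_ext n le. trans_matrix n le x \<pi>' \<pi> * wt n x \<pi>) = 0"
proof -
  let ?L = "lin_ext n le"
  let ?F = "\<lambda>\<pi>. (\<Sum>j\<in>{1..n}. if ext_prom n le j \<pi> = \<pi>' then x (\<pi> ! (j - 1)) * wt n x \<pi> else 0)"
  let ?Xs = "(\<Sum>j\<in>{1..n}. x (\<pi>' ! (j - 1)))"
  let ?s = "\<lambda>j. inv_prom n le j \<pi>'"
  have fin: "finite ?L" by (rule finite_L)
  have pt: "trans_matrix n le x \<pi>' \<pi> * wt n x \<pi> = ?F \<pi> - (if \<pi> = \<pi>' then ?Xs * wt n x \<pi>' else 0)"
    for \<pi>
  proof (cases "\<pi> = \<pi>'")
    case False
    then have F': "\<pi>' \<noteq> \<pi>" by simp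
    show ?thesis using False unfolding trans_matrix_def if_P[OF F'] sum.inter_filter[OF finite_atLeastAtMost] sum_distrib_right
      by (simp only: if_not_P[OF False] if_False diff_zero) (intro sum.cong refl, simp)
  next
    case True
    have "?Xs = (\<Sum>j\<in>{1..n}. if ext_prom n le j \<pi>' = \<pi>' then x (\<pi>' ! (j - 1)) else 0)
       + (\<Sum>j\<in>{1..n}. if ext_prom n le j \<pi>' \<noteq> \<pi>' then x (\<pi>' ! (j - 1)) else 0)"
      by (subst sum.distrib[symmetric]) (intro sum.cong refl, auto)
    moreover have T: "trans_matrix n le x \<pi>' \<pi>' = - (\<Sum>j\<in>{1..n}. if ext_prom n le j \<pi>' \<noteq> \<pi>' then x (\<pi>' ! (j - 1)) else 0)"
      unfolding trans_matrix_def sum.inter_filter[OF finite_atLeastAtMost] by simp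
    moreover have "?F \<pi>' = (\<Sum>j\<in>{1..n}. if ext_prom n le j \<pi>' = \<pi>' then x (\<pi>' ! (j - 1)) else 0) * wt n x \<pi>'"
      unfolding sum_distrib_right by (intro sum.cong refl) simp
    ultimately show ?thesis unfolding True by (simp add: algebra_simps)
  qed
  have "(\<Sum>\<pi>\<in>?L. trans_matrix n le x \<pi>' \<pi> * wt n x \<pi>) = (\<Sum>\<pi>\<in>?L. ?F \<pi>) - ?Xs * wt n x \<pi>'"
    unfolding pt using fin assms(1) by (simp add: sum_subtractf)
  also have "(\<Sum>\<pi>\<in>?L. ?F \<pi>) = (\<Sum>j\<in>{1..n}. \<Sum>\<pi>\<in>?L. if ext_prom n le j \<pi> = \<pi>' then x (\<pi> ! (j - 1)) * wt n x \<pi> else 0)"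
    by (rule sum.swap)
  also have "\<dots> = (\<Sum>j\<in>{1..n}. x (?s j ! (j - 1)) * wt n x (?s j))"
  proof (intro sum.cong refl)
    fix j assume j: "j \<in> {1..n}"
    have "(\<Sum>\<pi>\<in>?L. if ext_prom n le j \<pi> = \<pi>' then x (\<pi> ! (j - 1)) * wt n x \<pi> else 0)
        = (\<Sum>\<pi>\<in>?L. if \<pi> = ?s j then x (\<pi> ! (j - 1)) * wt n x \<pi> else 0)"
    proof (intro sum.cong refl)
      fix \<pi> assume p: "\<pi> \<in> ?L"
      have "ext_prom n le j \<pi> = \<pi>' \<longleftrightarrow> \<pi> = ?s j"
        using ext_inv[of j \<pi>' n le] inv_ext[of j \<pi> n le] j p assms(1) by auto
      then show "(if ext_prom n le j \<pi> = \<pi>' then x (\<pi> ! (j - 1)) * wt n x \<pi> else 0)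
        = (if \<pi> = ?s j then x (\<pi> ! (j - 1)) * wt n x \<pi> else 0)" by simp
    qed
    also have "\<dots> = x (?s j ! (j - 1)) * wt n x (?s j)"
      using inv_in[of j \<pi>' n le] j assms(1) fin by (simp add: sum.delta')
    finally show "(\<Sum>\<pi>\<in>?L. if ext_prom n le j \<pi> = \<pi>' then x (\<pi> ! (j - 1)) * wt n x \<pi> else 0)
      = x (?s j ! (j - 1)) * wt n x (?s j)" .
  qed
  also have "(\<Sum>j\<in>{1..n}. x (?s j ! (j - 1)) * wt n x (?s j)) = ?Xs * wt n x \<pi>'"
  proof (cases "n = 0")
    case True then show ?thesis by simp
  next
    case False
    have "(\<Sum>j\<in>{1..n}. x (?s j ! (j - 1)) * wt n x (?s j))
      = PS x \<pi>' n * wt n x \<pi>' - PS x (?s 1) (1 - 1) * wt n x (?s 1)"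
      by (rule telescope) (use assms False in auto)
    moreover have "PS x (?s 1) (1 - 1) = 0" by (simp add: PS_def)
    ultimately show ?thesis using S_eq[of x \<pi>' n] by simp
  qed
  finally show ?thesis by simp
qed

theorem theorem4p5:
  fixes n :: nat and le :: "nat \<Rightarrow> nat \<Rightarrow> bool" and x :: "nat \<Rightarrow> real"
  assumes "is_poset n le"
    and "natural_labeling n le"
    and "\<And>i. i \<in> {1..n} \<Longrightarrow> x i > 0"
  shows "wt n x [1..<n+1] = 1 \<and>
         (\<forall>\<pi>'\<in>lin_ext n le.
            (\<Sum>\<pi>\<in>lin_ext n le. trans_matrix n le x \<pi>' \<pi> * wt n x \<pi>) = 0)"
proof
  show "wt n x [1..<n+1] = 1"
    unfolding wt_def
  proof (intro prod.neutral ballI)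
    fix i assume i: "i \<in> {1..n}"
    have "(\<Sum>k\<in>{1..i}. x ([1..<n+1] ! (k - 1))) = (\<Sum>k\<in>{1..i}. x k)"
      by (intro sum.cong refl) (use i in \<open>auto simp: nth_upt simp del: upt_Suc\<close>)
    moreover have "(\<Sum>k\<in>{1..i}. x k) > 0"
      by (rule sum_pos) (use i assms(3) in auto)
    ultimately show "(\<Sum>k\<in>{1..i}. x k) / (\<Sum>k\<in>{1..i}. x ([1..<n+1] ! (k - 1))) = 1" by simp
  qed
  show "\<forall>\<pi>'\<in>lin_ext n le. (\<Sum>\<pi>\<in>lin_ext n le. trans_matrix n le x \<pi>' \<pi> * wt n x \<pi>) = 0"
    using stat_sum assms(3) by blast
qed

end
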